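(* Let $N$ be a nonnegative integer and let $f,a_1,p,d_1,d_2\in\mathbb{C}$ be such that every hypergeometric series below is well defined (no lower parameter is a nonpositive integer) and all denominators in the definitions of $h$ and $k$ below are nonzero. Put $$h=\frac{p(f-1-d_1-d_2+N)(p-f+1)}{p(f-p-1)-a_1(2f-2-d_1-d_2-a_1+N)},\qquad k=\frac{h(1+d_1+a_1-f)(1+d_2+a_1-f)}{d_1d_2-h(1+d_1+d_2+a_1-f)}.$$ Then $$ {}_{9}F_{8}\left[\begin{matrix} f-1,\ \frac{f+1}{2},\ a_1,\ f-p,\ p+1,\ d_1,\ d_2,\ 2f-2-d_1-d_2-a_1+N,\ -N\\ \frac{f-1}{2},\ f-a_1,\ p,\ f-p-1,\ f-d_1,\ f-d_2,\ 2+a_1+d_1+d_2-f-N,\ f+N\end{matrix};1\right]$$ $$=\frac{(f)_N\,(f-d_1-d_2)_N\,(f-a_1-d_1-1)_N\,(f-a_1-d_2-1)_N}{(f-d_1)_N\,(f-d_2)_N\,(f-a_1)_N\,(f-a_1-d_1-d_2-1)_N}\cdot\frac{(k+1)_N}{(k)_N}.$$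
   Context: $(x)_n$ denotes the Pochhammer symbol: $(x)_0=1$, $(x)_n=x(x+1)\cdots(x+n-1)$ for $n\ge1$. The generalized hypergeometric function is $${}_{r+1}F_{r}\left[\begin{matrix} a_1,\dots,a_{r+1}\\ b_1,\dots,b_r\end{matrix};z\right]=\sum_{n=0}^{\infty}\frac{(a_1)_n\cdots(a_{r+1})_n}{(b_1)_n\cdots(b_r)_n\,n!}z^n ,$$ where no $b_i$ is a nonpositive integer; when one upper parameter equals $-N$ with $N$ a nonnegative integer the series terminates. *)

theory Defs
  imports Complex_Main
begin

definition hyp_term :: "complex list \<Rightarrow> complex list \<Rightarrow> complex \<Rightarrow> nat \<Rightarrow> complex" where
  "hyp_term as bs z n =
     (\<Prod>a\<leftarrow>as. pochhammer a n) / ((\<Prod>b\<leftarrow>bs. pochhammer b n) * of_nat (fact n)) * z ^ n"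

definition hypF :: "complex list \<Rightarrow> complex list \<Rightarrow> complex \<Rightarrow> complex" where
  "hypF as bs z = (\<Sum>n. hyp_term as bs z n)"

definition nonpos_int :: "complex \<Rightarrow> bool" where
  "nonpos_int x \<longleftrightarrow> (\<exists>m::nat. x = - of_nat m)"

end

theory Submission
  imports Defs
begin



definition Ve :: "complex \<Rightarrow> complex \<Rightarrow> complex \<Rightarrow> nat \<Rightarrow> complex" where
 "Ve a e M n = pochhammer e n * pochhammer (-M) n / (pochhammer (1+a-e) n * pochhammer (1+a+M) n)"

lemma poch_shift: "pochhammer (x+1) n * x = pochhammer x n * (x + of_nat n)"
  using pochhammer_rec[of x n] pochhammer_rec'[of x n] by (simp add: mult_ac)

lemma Ve_shift:
  fixes a e N :: complex
  assumes nz: "e + of_nat n \<noteq> 0" "N+1 \<noteq> 0" "a-e \<noteq> 0" "1+a+N \<noteq> 0" "1+a+N+of_nat n \<noteq> 0"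
  shows "Ve a e N n = Ve a (e+1) (N+1) n *
     (e*(a-e)*(N+1-of_nat n)*(1+a+N+of_nat n)/((e+of_nat n)*(a-e+of_nat n)*(N+1)*(1+a+N)))"
proof -
  have F1: "pochhammer e n = e * pochhammer (e+1) n / (e + of_nat n)"
    using poch_shift[of e n] nz(1) by (simp add: field_simps)
  have F2: "pochhammer (-N) n = (N+1-of_nat n) * pochhammer (-(N+1)) n / (N+1)"
  proof -
    have "pochhammer (-(N+1)+1) n * (-(N+1)) = pochhammer (-(N+1)) n * (-(N+1) + of_nat n)"
      by (rule poch_shift)
    hence "pochhammer (-N) n * (N+1) = pochhammer (-(N+1)) n * (N+1 - of_nat n)"
      by (simp add: algebra_simps)
    thus ?thesis using nz(2) by (simp add: field_simps)
  qed
  have F3: "pochhammer (1+a-e) n = (a-e+of_nat n) * pochhammer (a-e) n / (a-e)"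
  proof -
    have "pochhammer ((a-e)+1) n * (a-e) = pochhammer (a-e) n * ((a-e) + of_nat n)"
      by (rule poch_shift)
    thus ?thesis using nz(3) by (simp add: field_simps add_ac)
  qed
  have F4: "pochhammer (1+a+N) n = (1+a+N) * pochhammer (1+a+(N+1)) n / (1+a+N+of_nat n)"
  proof -
    have "pochhammer ((1+a+N)+1) n * (1+a+N) = pochhammer (1+a+N) n * ((1+a+N) + of_nat n)"
      by (rule poch_shift)
    thus ?thesis using nz(5) by (simp add: field_simps add_ac)
  qed
  have A: "1+a-(e+1) = a-e" by simp
  show ?thesis unfolding Ve_def F1 F2 F3 F4 A
    by (simp add: divide_inverse inverse_mult_distrib mult_ac)
qed


definition Cm :: "complex \<Rightarrow> complex \<Rightarrow> complex \<Rightarrow> complex \<Rightarrow> nat \<Rightarrow> complex" where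
 "Cm a b c d n = (pochhammer a n * pochhammer (1 + a/2) n * pochhammer b n * pochhammer c n * pochhammer d n) /
    (pochhammer 1 n * pochhammer (a/2) n * pochhammer (1+a-b) n * pochhammer (1+a-c) n * pochhammer (1+a-d) n)"



lemma frac5: fixes p1 :: complex shows
 "(q1*p1)*(q2*p2)*(q3*p3)*(q4*p4)*(q5*p5) / ((s1*r1)*(s2*r2)*(s3*r3)*(s4*r4)*(s5*r5))
  = (p1*p2*p3*p4*p5)/(r1*r2*r3*r4*r5) * ((q1*q2*q3*q4*q5)/(s1*s2*s3*s4*s5))"
  by (simp add: divide_inverse inverse_mult_distrib mult_ac)

lemma frac2: fixes p1 :: complex shows
 "(q1*p1)*(q2*p2) / ((s1*r1)*(s2*r2))
  = (p1*p2)/(r1*r2) * ((q1*q2)/(s1*s2))"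
  by (simp add: divide_inverse inverse_mult_distrib mult_ac)

lemma Cm_Suc: "Cm a b c d (Suc n) = Cm a b c d n * ((a+of_nat n)*(a+2*of_nat n+2)*(b+of_nat n)*(c+of_nat n)*(d+of_nat n) /
   ((of_nat n+1)*(a+2*of_nat n)*(a-b+of_nat n+1)*(a-c+of_nat n+1)*(a-d+of_nat n+1)))"
proof -
  have h1: "1 + a/2 + of_nat n = (a+2*of_nat n+2)/2" "a/2 + of_nat n = (a+2*of_nat n)/2"
    by (simp_all add: field_simps)
  have h: "(1 + a/2 + of_nat n) / (a/2 + of_nat n) = (a+2*of_nat n+2)/(a+2*of_nat n)"
  proof -
    have g: "(x/2)/(y/2) = x/(y::complex)" for x y by (cases "y=0") (simp_all add: field_simps)
    show ?thesis unfolding h1 g ..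
  qed
  have h2: "1+a-b+of_nat n = a-b+of_nat n+1" "1+a-c+of_nat n = a-c+of_nat n+1" "1+a-d+of_nat n = a-d+of_nat n+1"
    "1 + of_nat n = (of_nat n + 1::complex)"
    by (simp_all add: field_simps)
  have e: "(x1*x2*x3*x4*x5)/(y1*y2*y3*y4*y5) = (x1/y1)*(x2/y2)*(x3/y3)*(x4/y4)*(x5/y5)" for x1 x2 x3 x4 x5 y1 y2 y3 y4 y5 :: complex
    by (simp add: divide_inverse inverse_mult_distrib mult_ac)
  show ?thesis unfolding Cm_def pochhammer_rec' frac5 h2 e[of "a+of_nat n"] h ..
qed

lemma Ve_Suc: "Ve a e M (Suc n) = Ve a e M n * ((e+of_nat n)*(-M+of_nat n) / ((1+a-e+of_nat n)*(1+a+M+of_nat n)))"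
  unfolding Ve_def pochhammer_rec' frac2 ..



lemma wz_rat:
  fixes a b c d e N n :: complex
  assumes he: "e = 1+2*a-b-c-d+N"
  and nz: "1+a+N \<noteq> 0" "e-a+b \<noteq> 0" "e-a+c \<noteq> 0" "e-a+d \<noteq> 0"
   "e+n \<noteq> 0" "a-e+n \<noteq> 0" "N+1 \<noteq> 0" "a+2*n \<noteq> 0" "a+2*n+2 \<noteq> 0" "e+n+1 \<noteq> 0"
   "n+1 \<noteq> 0" "a-b+n+1 \<noteq> 0" "a-c+n+1 \<noteq> 0" "a-d+n+1 \<noteq> 0" "a+N+n+2 \<noteq> 0"
  shows "(1+a-b+N)*(1+a-c+N)*(1+a-d+N)*(e-a) / ((1+a+N)*(e-a+b)*(e-a+c)*(e-a+d))
     - e*(a-e)*(N+1-n)*(1+a+N+n)/((e+n)*(a-e+n)*(N+1)*(1+a+N))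
   = ((a+n)*(a+2*n+2)*(b+n)*(c+n)*(d+n) / ((n+1)*(a+2*n)*(a-b+n+1)*(a-c+n+1)*(a-d+n+1)))
     * (((e+1)+n)*(-(N+1)+n) / ((1+a-(e+1)+n)*(1+a+(N+1)+n)))
     * ((a-e)*(1+a+N+(n+1))*(n+1)*(a-b+(n+1))*(a-c+(n+1))*(a-d+(n+1))*(e+N+1)/((e+(n+1))*(N+1)*(1+a+N)*(a+2*(n+1))*(e-a+b)*(e-a+c)*(e-a+d)))
     - (a-e)*(1+a+N+n)*n*(a-b+n)*(a-c+n)*(a-d+n)*(e+N+1)/((e+n)*(N+1)*(1+a+N)*(a+2*n)*(e-a+b)*(e-a+c)*(e-a+d))"
   (is "?K - ?s = ?X1 * ?X2 * ?X3 - ?Q")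
proof -
  have r1: "(e+1)+n = e+n+1" "-(N+1)+n = n-N-1" "1+a-(e+1)+n = a-e+n" "1+a+(N+1)+n = a+N+n+2"
     "1+a+N+(n+1) = a+N+n+2" "a-b+(n+1) = a-b+n+1" "a-c+(n+1) = a-c+n+1" "a-d+(n+1) = a-d+n+1"
     "e+(n+1) = e+n+1" "a+2*(n+1) = a+2*n+2" by (simp_all add: algebra_simps)
  define Z where "Z = (a+n)*(b+n)*(c+n)*(d+n)*(n-N-1)*(a-e)*(e+N+1)"
  define W where "W = (a+2*n)*(a-e+n)*(N+1)*(1+a+N)*(e-a+b)*(e-a+c)*(e-a+d)"
  define C where "C = (a+2*n+2)*(e+n+1)*(n+1)*(a-b+n+1)*(a-c+n+1)*(a-d+n+1)*(a+N+n+2)"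
  have C0: "C \<noteq> 0" unfolding C_def using nz by simp
  have X: "?X1 * ?X2 * ?X3 = Z / W"
  proof -
    have "?X1 * ?X2 * ?X3 = (Z*C)/(W*C)"
      unfolding r1 times_divide_times_eq Z_def W_def C_def
      by (simp only: mult_ac)
    also have "\<dots> = Z/W" using C0 by simp
    finally show ?thesis .
  qed
  define D0 where "D0 = (a+2*n)*(a-e+n)*(e+n)*(N+1)*(1+a+N)*(e-a+b)*(e-a+c)*(e-a+d)"
  have D0: "D0 \<noteq> 0" unfolding D0_def using nz by simp
  have k: "?K * D0 = (1+a-b+N)*(1+a-c+N)*(1+a-d+N)*(e-a)*((a+2*n)*(a-e+n)*(e+n)*(N+1))"
  proof -
    have "D0 = ((1+a+N)*(e-a+b)*(e-a+c)*(e-a+d)) * ((a+2*n)*(a-e+n)*(e+n)*(N+1))"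
      unfolding D0_def by (simp only: mult_ac)
    thus ?thesis using nz by simp
  qed
  have s: "?s * D0 = e*(a-e)*(N+1-n)*(1+a+N+n) * ((a+2*n)*(e-a+b)*(e-a+c)*(e-a+d))"
  proof -
    have "D0 = ((e+n)*(a-e+n)*(N+1)*(1+a+N)) * ((a+2*n)*(e-a+b)*(e-a+c)*(e-a+d))"
      unfolding D0_def by (simp only: mult_ac)
    thus ?thesis using nz by simp
  qed
  have z: "Z / W * D0 = Z * (e+n)"
  proof -
    have "D0 = W * (e+n)" unfolding D0_def W_def by (simp only: mult_ac)
    moreover have "W \<noteq> 0" unfolding W_def using nz by simp
    ultimately show ?thesis by simp
  qed
  have q: "?Q * D0 = (a-e)*(1+a+N+n)*n*(a-b+n)*(a-c+n)*(a-d+n)*(e+N+1) * (a-e+n)"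
  proof -
    have "D0 = ((e+n)*(N+1)*(1+a+N)*(a+2*n)*(e-a+b)*(e-a+c)*(e-a+d)) * (a-e+n)"
      unfolding D0_def by (simp only: mult_ac)
    thus ?thesis using nz by simp
  qed
  have poly: "(1+a-b+N)*(1+a-c+N)*(1+a-d+N)*(e-a)*((a+2*n)*(a-e+n)*(e+n)*(N+1))
     - e*(a-e)*(N+1-n)*(1+a+N+n) * ((a+2*n)*(e-a+b)*(e-a+c)*(e-a+d))
     = Z * (e+n) - (a-e)*(1+a+N+n)*n*(a-b+n)*(a-c+n)*(a-d+n)*(e+N+1) * (a-e+n)"
    unfolding Z_def using he by algebra
  have "(?K - ?s) * D0 = ?K * D0 - ?s * D0" by (rule left_diff_distrib)
  also have "\<dots> = Z / W * D0 - ?Q * D0" unfolding k s z q using poly .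
  also have "\<dots> = (?X1 * ?X2 * ?X3 - ?Q) * D0" unfolding X by (rule left_diff_distrib[symmetric])
  finally have "(?K - ?s) * D0 = (?X1 * ?X2 * ?X3 - ?Q) * D0" .
  thus ?thesis using D0 by simp
qed



definition RD :: "complex \<Rightarrow> complex \<Rightarrow> complex \<Rightarrow> complex \<Rightarrow> nat \<Rightarrow> complex" where
 "RD a b c d M = pochhammer (1+a) M * pochhammer (1+a-b-c) M * pochhammer (1+a-b-d) M * pochhammer (1+a-c-d) M /
   (pochhammer (1+a-b) M * pochhammer (1+a-c) M * pochhammer (1+a-d) M * pochhammer (1+a-b-c-d) M)"

lemma frac4: fixes p1 :: complex shows
 "(q1*p1)*(q2*p2)*(q3*p3)*(q4*p4) / ((s1*r1)*(s2*r2)*(s3*r3)*(s4*r4))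
  = (p1*p2*p3*p4)/(r1*r2*r3*r4) * ((q1*q2*q3*q4)/(s1*s2*s3*s4))"
  by (simp add: divide_inverse inverse_mult_distrib mult_ac)

lemma RD_Suc: "RD a b c d (Suc M) = RD a b c d M * ((1+a+of_nat M)*(1+a-b-c+of_nat M)*(1+a-b-d+of_nat M)*(1+a-c-d+of_nat M) /
   ((1+a-b+of_nat M)*(1+a-c+of_nat M)*(1+a-d+of_nat M)*(1+a-b-c-d+of_nat M)))"
  unfolding RD_def pochhammer_rec' frac4 ..

definition gen :: "complex list \<Rightarrow> nat \<Rightarrow> bool" where
  "gen xs L \<longleftrightarrow> (\<forall>x\<in>set xs. \<forall>i::int. \<bar>i\<bar> \<le> int L \<longrightarrow> x + of_int i \<noteq> 0)"

lemma genI: assumes "gen xs L" "x \<in> set xs" "\<bar>i\<bar> \<le> int L" "y = x + of_int i \<or> y = -(x + of_int i)"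
  shows "y \<noteq> 0"
proof -
  have "x + of_int i \<noteq> 0" using assms(1-3) unfolding gen_def by auto
  thus ?thesis using assms(4) by (metis add.inverse_neutral minus_equation_iff)
qed

lemma dougall:
  fixes a b c d :: complex
  assumes g: "gen [a, a-b, a-c, a-d, a-b-c, a-b-d, a-c-d, a-b-c-d, 2*a-b-c-d] L"
  shows "2*M+4 \<le> L \<Longrightarrow> (\<Sum>n\<le>M. Cm a b c d n * Ve a (1+2*a-b-c-d+of_nat M) (of_nat M) n) = RD a b c d M"
proof (induction M)
  case 0
  show ?case by (simp add: Cm_def Ve_def RD_def)
next
  case (Suc N)
  hence LN: "2*N+6 \<le> L" by simp
  have IH: "(\<Sum>n\<le>N. Cm a b c d n * Ve a (1+2*a-b-c-d+of_nat N) (of_nat N) n) = RD a b c d N"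
    using Suc by simp
  define Nc where "Nc = (of_nat N::complex)"
  define e where "e = 1+2*a-b-c-d+Nc"
  define T where "T n = Cm a b c d n * Ve a e Nc n" for n
  define T' where "T' n = Cm a b c d n * Ve a (e+1) (Nc+1) n" for n
  define Kq where "Kq = (1+a-b+Nc)*(1+a-c+Nc)*(1+a-d+Nc)*(e-a) / ((1+a+Nc)*(e-a+b)*(e-a+c)*(e-a+d))"
  define Q where "Q m = (a-e)*(1+a+Nc+m)*m*(a-b+m)*(a-c+m)*(a-d+m)*(e+Nc+1)/((e+m)*(Nc+1)*(1+a+Nc)*(a+2*m)*(e-a+b)*(e-a+c)*(e-a+d))" for m
  define H where "H n = T' n * Q (of_nat n)" for n
  have G: "y \<noteq> 0" if "x \<in> set [a, a-b, a-c, a-d, a-b-c, a-b-d, a-c-d, a-b-c-d, 2*a-b-c-d]" "\<bar>i\<bar> \<le> int L"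
     "y = x + of_int i \<or> y = -(x + of_int i)" for x i y
    using genI[OF g that] .
  have c1: "1+a+Nc \<noteq> 0" by (rule G[of a "int (1+N)"]) (use LN in \<open>auto simp: Nc_def algebra_simps\<close>)
  have c2: "e-a+b \<noteq> 0" by (rule G[of "a-c-d" "int (1+N)"]) (use LN in \<open>auto simp: Nc_def e_def algebra_simps\<close>)
  have c3: "e-a+c \<noteq> 0" by (rule G[of "a-b-d" "int (1+N)"]) (use LN in \<open>auto simp: Nc_def e_def algebra_simps\<close>)
  have c4: "e-a+d \<noteq> 0" by (rule G[of "a-b-c" "int (1+N)"]) (use LN in \<open>auto simp: Nc_def e_def algebra_simps\<close>)
  have c5: "Nc+1 \<noteq> 0" unfolding Nc_def by (metis of_nat_Suc add.commute of_nat_eq_0_iff nat.simps(3))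
  have c6: "a-e \<noteq> 0" by (rule G[of "a-b-c-d" "int (1+N)"]) (use LN in \<open>auto simp: Nc_def e_def algebra_simps\<close>)
  have c7: "1+a-b+Nc \<noteq> 0" by (rule G[of "a-b" "int (1+N)"]) (use LN in \<open>auto simp: Nc_def algebra_simps\<close>)
  have c8: "1+a-c+Nc \<noteq> 0" by (rule G[of "a-c" "int (1+N)"]) (use LN in \<open>auto simp: Nc_def algebra_simps\<close>)
  have c9: "1+a-d+Nc \<noteq> 0" by (rule G[of "a-d" "int (1+N)"]) (use LN in \<open>auto simp: Nc_def algebra_simps\<close>)
  have step: "Kq * T' n - T n = H (Suc n) - H n" if nN: "n \<le> Suc N" for n
  proof -
    define m where "m = (of_nat n :: complex)"
    have n1: "e+m \<noteq> 0" by (rule G[of "2*a-b-c-d" "int (1+N+n)"]) (use LN nN in \<open>auto simp: m_def Nc_def e_def algebra_simps\<close>)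
    have n2: "a-e+m \<noteq> 0" by (rule G[of "a-b-c-d" "int (1+N) - int n"]) (use LN nN in \<open>auto simp: m_def Nc_def e_def algebra_simps\<close>)
    have n3: "a+2*m \<noteq> 0" by (rule G[of "a" "int (2*n)"]) (use LN nN in \<open>auto simp: m_def algebra_simps\<close>)
    have n4: "a+2*m+2 \<noteq> 0" by (rule G[of "a" "int (2*n+2)"]) (use LN nN in \<open>auto simp: m_def algebra_simps\<close>)
    have n5: "e+m+1 \<noteq> 0" by (rule G[of "2*a-b-c-d" "int (2+N+n)"]) (use LN nN in \<open>auto simp: m_def Nc_def e_def algebra_simps\<close>)
    have n6: "m+1 \<noteq> 0" unfolding m_def by (metis of_nat_Suc add.commute of_nat_eq_0_iff nat.simps(3))
    have n7: "a-b+m+1 \<noteq> 0" by (rule G[of "a-b" "int (1+n)"]) (use LN nN in \<open>auto simp: m_def algebra_simps\<close>)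
    have n8: "a-c+m+1 \<noteq> 0" by (rule G[of "a-c" "int (1+n)"]) (use LN nN in \<open>auto simp: m_def algebra_simps\<close>)
    have n9: "a-d+m+1 \<noteq> 0" by (rule G[of "a-d" "int (1+n)"]) (use LN nN in \<open>auto simp: m_def algebra_simps\<close>)
    have n10: "a+Nc+m+2 \<noteq> 0" by (rule G[of "a" "int (2+N+n)"]) (use LN nN in \<open>auto simp: m_def Nc_def algebra_simps\<close>)
    have n11: "1+a+Nc+m \<noteq> 0" by (rule G[of "a" "int (1+N+n)"]) (use LN nN in \<open>auto simp: m_def Nc_def algebra_simps\<close>)
    define s where "s = e*(a-e)*(Nc+1-m)*(1+a+Nc+m)/((e+m)*(a-e+m)*(Nc+1)*(1+a+Nc))"
    have sT: "T n = T' n * s"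
      using Ve_shift[of e n Nc a] n1 c5 c6 c1 n11 unfolding T_def T'_def s_def m_def by simp
    define X1 where "X1 = (a+m)*(a+2*m+2)*(b+m)*(c+m)*(d+m) / ((m+1)*(a+2*m)*(a-b+m+1)*(a-c+m+1)*(a-d+m+1))"
    define X2 where "X2 = ((e+1)+m)*(-(Nc+1)+m) / ((1+a-(e+1)+m)*(1+a+(Nc+1)+m))"
    have rT: "T' (Suc n) = T' n * (X1 * X2)"
      unfolding T'_def Cm_Suc Ve_Suc X1_def X2_def m_def by (simp only: mult_ac)
    have Qs: "Q (of_nat (Suc n)) = Q (m + 1)" by (simp add: m_def add.commute)
    have wz: "Kq - s = X1 * X2 * Q (m+1) - Q m"
      unfolding Kq_def s_def X1_def X2_def Q_def
      by (rule wz_rat) (use c1 c2 c3 c4 c5 n1 n2 n3 n4 n5 n6 n7 n8 n9 n10 in \<open>simp_all add: e_def\<close>)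
    have "Kq * T' n - T n = T' n * (Kq - s)" unfolding sT by (simp add: algebra_simps)
    also have "\<dots> = T' n * (X1 * X2) * Q (m+1) - T' n * Q m" unfolding wz by (simp add: algebra_simps)
    also have "\<dots> = H (Suc n) - H n" unfolding H_def rT Qs m_def ..
    finally show ?thesis .
  qed
  have Tl: "T (Suc N) = 0"
    unfolding T_def Ve_def Nc_def by (simp add: pochhammer_of_nat_eq_0_lemma)
  have T'l: "T' (Suc (Suc N)) = 0"
  proof -
    have q1: "-(Nc+1) = - of_nat (Suc N)" by (simp add: Nc_def)
    have q2: "pochhammer (- of_nat (Suc N)::complex) (Suc (Suc N)) = 0"
      by (rule pochhammer_of_nat_eq_0_lemma) simp
    show ?thesis unfolding T'_def Ve_def q1 q2 by simp
  qed
  have H0: "H 0 = 0" unfolding H_def Q_def by simp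
  have tele: "(\<Sum>n\<le>Suc N. H (Suc n) - H n) = H (Suc (Suc N)) - H 0"
    unfolding atMost_atLeast0 by (rule sum_Suc_diff) simp
  have HS: "H (Suc (Suc N)) = 0" unfolding H_def T'l by simp
  have "Kq * (\<Sum>n\<le>Suc N. T' n) - (\<Sum>n\<le>Suc N. T n) = (\<Sum>n\<le>Suc N. Kq * T' n - T n)"
    by (simp add: sum_subtractf sum_distrib_left del: sum.atMost_Suc)
  also have "\<dots> = (\<Sum>n\<le>Suc N. H (Suc n) - H n)"
    by (rule sum.cong) (auto simp: step)
  also have "\<dots> = 0" unfolding tele HS H0 by simp
  finally have "Kq * (\<Sum>n\<le>Suc N. T' n) - (\<Sum>n\<le>Suc N. T n) = 0" .
  moreover have "(\<Sum>n\<le>Suc N. T n) = RD a b c d N"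
    using IH Tl unfolding T_def e_def Nc_def by simp
  ultimately have KS: "Kq * (\<Sum>n\<le>Suc N. T' n) = RD a b c d N" by simp
  have Kq0: "Kq \<noteq> 0" unfolding Kq_def using c1 c2 c3 c4 c6 c7 c8 c9 by simp
  have RK: "RD a b c d (Suc N) * Kq = RD a b c d N"
  proof -
    have ee: "e-a = 1+a-b-c-d+Nc" "e-a+b = 1+a-c-d+Nc" "e-a+c = 1+a-b-d+Nc" "e-a+d = 1+a-b-c+Nc"
      by (simp_all add: e_def algebra_simps)
    have z: "1+a-b-c-d+Nc \<noteq> 0" "1+a-c-d+Nc \<noteq> 0" "1+a-b-d+Nc \<noteq> 0" "1+a-b-c+Nc \<noteq> 0"
      using c2 c3 c4 c6 unfolding ee[symmetric] by (auto simp: algebra_simps)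
    define A where "A = (1+a+Nc)*(1+a-b-c+Nc)*(1+a-b-d+Nc)*(1+a-c-d+Nc)"
    define B where "B = (1+a-b+Nc)*(1+a-c+Nc)*(1+a-d+Nc)*(1+a-b-c-d+Nc)"
    have KB: "Kq = B / A" unfolding Kq_def ee(2,3,4) unfolding ee(1) A_def B_def by (simp only: mult_ac)
    have A0: "A \<noteq> 0" unfolding A_def using z c1 by simp
    have B0: "B \<noteq> 0" unfolding B_def using z c7 c8 c9 by simp
    have "RD a b c d (Suc N) = RD a b c d N * (A / B)" unfolding RD_Suc A_def B_def Nc_def ..
    thus ?thesis unfolding KB using A0 B0 by simp
  qed
  have eq: "(\<Sum>n\<le>Suc N. Cm a b c d n * Ve a (1+2*a-b-c-d+of_nat (Suc N)) (of_nat (Suc N)) n) = (\<Sum>n\<le>Suc N. T' n)"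
  proof -
    have h2: "of_nat (Suc N) = Nc+1" by (simp add: Nc_def)
    have h1: "1+2*a-b-c-d+(Nc+1) = e+1" by (simp add: e_def)
    show ?thesis unfolding h2 h1 T'_def ..
  qed
  show ?case unfolding eq using KS RK Kq0
    by (metis mult.commute mult_cancel_left)
qed



lemma hyp_decomp:
  fixes f a1 p d1 d2 :: complex and N n :: nat
  shows "hyp_term [f - 1, (f + 1) / 2, a1, f - p, p + 1, d1, d2, 2 * f - 2 - d1 - d2 - a1 + of_nat N, - of_nat N]
              [(f - 1) / 2, f - a1, p, f - p - 1, f - d1, f - d2, 2 + a1 + d1 + d2 - f - of_nat N, f + of_nat N] 1 n
   = Cm (f-1) a1 d1 d2 n * Ve (f-1) (2 * f - 2 - d1 - d2 - a1 + of_nat N) (of_nat N) n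
     * (pochhammer (p+1) n * pochhammer (f-p) n / (pochhammer p n * pochhammer (f-p-1) n))"
proof -
  have r: "1 + (f-1)/2 = (f+1)/2" "1+(f-1)-a1 = f-a1" "1+(f-1)-d1 = f-d1" "1+(f-1)-d2 = f-d2"
    "1+(f-1)-(2 * f - 2 - d1 - d2 - a1 + of_nat N) = 2 + a1 + d1 + d2 - f - of_nat N"
    "1+(f-1)+of_nat N = f + of_nat N"
    by (simp_all add: field_simps)
  have rearr: "(x1*(x2*(x3*(x4*(x5*(x6*(x7*(x8*x9))))))))/((y1*(y2*(y3*(y4*(y5*(y6*(y7*y8)))))))*F)
     = (x1*x2*x3*x6*x7)/(F*y1*y2*y5*y6) * (x8*x9/(y7*y8)) * (x5*x4/(y3*y4))"
    for x1 x2 x3 x4 x5 x6 x7 x8 x9 y1 y2 y3 y4 y5 y6 y7 y8 F :: complex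
    by (simp add: divide_inverse inverse_mult_distrib mult_ac)
  have hf: "(of_nat (fact n) :: complex) = pochhammer 1 n" by (metis of_nat_fact pochhammer_fact)
  show ?thesis unfolding hyp_term_def Cm_def Ve_def r
    by (simp only: list.map prod_list.Cons prod_list.Nil mult_1_right power_one hf rearr)
qed

lemma ratio1:
  fixes x :: complex
  assumes "x \<noteq> 0" "pochhammer x n \<noteq> 0"
  shows "pochhammer (x+1) n / pochhammer x n = (x + of_nat n)/x"
  using poch_shift[of x n] assms by (simp add: field_simps)

lemma gen_poch:
  assumes "gen xs L" "x \<in> set xs" "y = x + of_int k" "\<bar>k\<bar> + int n \<le> int L"
  shows "pochhammer y n \<noteq> 0"
proof
  assume "pochhammer y n = 0"
  then obtain j where j: "j < n" "y = - of_nat j" by (auto simp: pochhammer_eq_0_iff)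
  have "\<bar>k + int j\<bar> \<le> int L" using abs_triangle_ineq[of k "int j"] j(1) assms(4) by simp
  hence A: "x + of_int (k + int j) \<noteq> 0"
    using assms(1,2) unfolding gen_def by blast
  have B: "x + of_int (k + int j) = (x + of_int k) + of_nat j" by (simp add: algebra_simps)
  have "x + of_int k = - of_nat j" using j(2) assms(3) by simp
  with A B show False by simp
qed

lemma gen_subset: "set ys \<subseteq> set xs \<Longrightarrow> gen xs L \<Longrightarrow> gen ys L"
  unfolding gen_def by blast


lemma Cm_up:
  fixes a b c d :: complex
  assumes "b \<noteq> 0" "a - b + of_nat n \<noteq> 0"
  shows "Cm a (b+1) c d n = Cm a b c d n * ((b + of_nat n)*(a-b+of_nat n)/(b*(a-b)))"
proof -
  have F1: "pochhammer (b+1) n = pochhammer b n * (b + of_nat n) / b"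
    using poch_shift[of b n] assms(1) by (simp add: field_simps)
  have F2: "pochhammer (1+a-(b+1)) n = pochhammer (1+a-b) n * (a-b) / (a-b+of_nat n)"
  proof -
    have "pochhammer ((a-b)+1) n * (a-b) = pochhammer (a-b) n * ((a-b) + of_nat n)" by (rule poch_shift)
    thus ?thesis using assms(2) by (simp add: field_simps add_ac)
  qed
  have ab: "(x1*x2*(x3*u/v)*x4*x5)/(y1*y2*(y3*w/z)*y4*y5) = (x1*x2*x3*x4*x5)/(y1*y2*y3*y4*y5) * (u*z/(v*w))"
    for x1 x2 x3 x4 x5 y1 y2 y3 y4 y5 u v w z :: complex
    by (simp add: divide_inverse inverse_mult_distrib mult_ac)
  show ?thesis unfolding Cm_def F1 F2 ab by (simp only: mult_ac)
qed

lemma Ve_up: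
  fixes a e M :: complex
  assumes "e \<noteq> 0" "a - e + of_nat n \<noteq> 0"
  shows "Ve a (e+1) M n = Ve a e M n * ((e + of_nat n)*(a-e+of_nat n)/(e*(a-e)))"
proof -
  have F1: "pochhammer (e+1) n = pochhammer e n * (e + of_nat n) / e"
    using poch_shift[of e n] assms(1) by (simp add: field_simps)
  have F2: "pochhammer (1+a-(e+1)) n = pochhammer (1+a-e) n * (a-e) / (a-e+of_nat n)"
  proof -
    have "pochhammer ((a-e)+1) n * (a-e) = pochhammer (a-e) n * ((a-e) + of_nat n)" by (rule poch_shift)
    thus ?thesis using assms(2) by (simp add: field_simps add_ac)
  qed
  have ab: "((x1*u/v)*x2)/((y1*w/z)*y2) = (x1*x2)/(y1*y2) * (u*z/(v*w))"
    for x1 x2 y1 y2 u v w z :: complex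
    by (simp add: divide_inverse inverse_mult_distrib mult_ac)
  show ?thesis unfolding Ve_def F1 F2 ab by (simp only: mult_ac)
qed


lemma main_generic:
  fixes f a1 p d1 d2 h k :: complex and N L :: nat
  assumes g: "gen [f-1, f-1-a1, f-1-d1, f-1-d2, f-1-a1-d1, f-1-a1-d2, f-1-d1-d2, f-1-a1-d1-d2, 2*(f-1)-a1-d1-d2,
       f-1-(a1+1), f-1-(a1+1)-d1, f-1-(a1+1)-d2, f-1-(a1+1)-d1-d2, 2*(f-1)-(a1+1)-d1-d2, a1, f-1-p] L"
    and L: "2*N+4 \<le> L"
    and p0: "p \<noteq> 0" and pp: "\<forall>n\<le>N. pochhammer p n \<noteq> 0"
    and wne: "a1*(f-1-a1) \<noteq> (2*f-2-d1-d2-a1+of_nat N)*(f-1-(2*f-2-d1-d2-a1+of_nat N))"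
    and hden: "p * (f - p - 1) - a1 * (2 * f - 2 - d1 - d2 - a1 + of_nat N) \<noteq> 0"
    and h_def: "h = p * (f - 1 - d1 - d2 + of_nat N) * (p - f + 1) /
                   (p * (f - p - 1) - a1 * (2 * f - 2 - d1 - d2 - a1 + of_nat N))"
    and kden: "d1 * d2 - h * (1 + d1 + d2 + a1 - f) \<noteq> 0"
    and k_def: "k = h * (1 + d1 + a1 - f) * (1 + d2 + a1 - f) /
                   (d1 * d2 - h * (1 + d1 + d2 + a1 - f))"
    and kN: "pochhammer k N \<noteq> 0" and N0: "N > 0"
  shows "(\<Sum>n\<le>N. hyp_term [f - 1, (f + 1) / 2, a1, f - p, p + 1, d1, d2, 2 * f - 2 - d1 - d2 - a1 + of_nat N, - of_nat N]
              [(f - 1) / 2, f - a1, p, f - p - 1, f - d1, f - d2, 2 + a1 + d1 + d2 - f - of_nat N, f + of_nat N] 1 n)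
         = (pochhammer f N * pochhammer (f - d1 - d2) N * pochhammer (f - a1 - d1 - 1) N
              * pochhammer (f - a1 - d2 - 1) N)
           / (pochhammer (f - d1) N * pochhammer (f - d2) N * pochhammer (f - a1) N
              * pochhammer (f - a1 - d1 - d2 - 1) N)
           * (pochhammer (k + 1) N / pochhammer k N)"
proof -
  define a where "a = f - 1"
  define Nc where "Nc = (of_nat N :: complex)"
  define e where "e = 2*f-2-d1-d2-a1+Nc"
  define W where "W n = Cm a a1 d1 d2 n * Ve a e Nc n" for n
  define wp where "wp = p*(a-p)"
  define wb where "wb = a1*(a-a1)"
  define we where "we = e*(a-e)"
  define \<alpha> where "\<alpha> = we*(wb-wp)/(wp*(wb-we))"
  define m where "m n = of_nat n * (of_nat n + a)" for n :: nat
  have G: "y \<noteq> 0" if "x \<in> set [f-1, f-1-a1, f-1-d1, f-1-d2, f-1-a1-d1, f-1-a1-d2, f-1-d1-d2, f-1-a1-d1-d2, 2*(f-1)-a1-d1-d2,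
       f-1-(a1+1), f-1-(a1+1)-d1, f-1-(a1+1)-d2, f-1-(a1+1)-d1-d2, 2*(f-1)-(a1+1)-d1-d2, a1, f-1-p]" "\<bar>i\<bar> \<le> int L"
     "y = x + of_int i \<or> y = -(x + of_int i)" for x i y
    using genI[OF g that] .
  have GP: "pochhammer y n \<noteq> 0" if "x \<in> set [f-1, f-1-a1, f-1-d1, f-1-d2, f-1-a1-d1, f-1-a1-d2, f-1-d1-d2, f-1-a1-d1-d2, 2*(f-1)-a1-d1-d2,
       f-1-(a1+1), f-1-(a1+1)-d1, f-1-(a1+1)-d2, f-1-(a1+1)-d1-d2, 2*(f-1)-(a1+1)-d1-d2, a1, f-1-p]"
     "y = x + of_int kk" "\<bar>kk\<bar> + int n \<le> int L" for x kk y n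
    using gen_poch[OF g that] .
  have fp1: "f-p-1 \<noteq> 0" by (rule G[of "f-1-p" 0]) auto
  have e0: "e \<noteq> 0" by (rule G[of "2*(f-1)-a1-d1-d2" "int N"]) (use L in \<open>auto simp: e_def Nc_def algebra_simps\<close>)
  have ae: "a - e + of_nat n \<noteq> 0" if "n \<le> N" for n
    by (rule G[of "f-1-a1-d1-d2" "int N - int n"]) (use L that in \<open>auto simp: e_def Nc_def a_def algebra_simps\<close>)
  have a10: "a1 \<noteq> 0" by (rule G[of "a1" 0]) auto
  have aa1: "a - a1 + of_nat n \<noteq> 0" if "n \<le> N" for n
    by (rule G[of "f-1-a1" "int n"]) (use L that in \<open>auto simp: a_def algebra_simps\<close>)
  have ap: "a - p \<noteq> 0" using fp1 unfolding a_def by (metis diff_diff_eq2 diff_right_commute)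
  have wp0: "wp \<noteq> 0" unfolding wp_def using p0 ap by simp
  have wb0: "wb \<noteq> 0" unfolding wb_def using a10 aa1[of 0] by simp
  have we0: "we \<noteq> 0" unfolding we_def using e0 ae[of 0] by simp
  have wbe: "wb - we \<noteq> 0" using wne unfolding wb_def we_def e_def a_def Nc_def by simp
  have S1: "hyp_term [f - 1, (f + 1) / 2, a1, f - p, p + 1, d1, d2, 2 * f - 2 - d1 - d2 - a1 + of_nat N, - of_nat N]
              [(f - 1) / 2, f - a1, p, f - p - 1, f - d1, f - d2, 2 + a1 + d1 + d2 - f - of_nat N, f + of_nat N] 1 n
         = W n * (1 + m n / wp)" if nN: "n \<le> N" for n
  proof -
    have pr1: "pochhammer (p+1) n / pochhammer p n = (p + of_nat n)/p"
      using ratio1[of p n] p0 pp nN by simp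
    have q0: "pochhammer (f-p-1) n \<noteq> 0" by (rule GP[where x="f-1-p" and kk=0]) (use L nN in auto)
    have pr2: "pochhammer (f-p) n / pochhammer (f-p-1) n = (f-p-1 + of_nat n)/(f-p-1)"
      using ratio1[of "f-p-1" n] fp1 q0 by simp
    have "(p + of_nat n)/p * ((f-p-1 + of_nat n)/(f-p-1)) = 1 + m n / wp"
      unfolding m_def wp_def a_def using p0 fp1 ap wp0 unfolding wp_def a_def
      by (simp add: field_simps, (simp add: algebra_simps)?)
    thus ?thesis unfolding hyp_decomp W_def a_def e_def Nc_def times_divide_times_eq[symmetric] pr1 pr2
      by simp
  qed
  have S2: "Cm a a1 d1 d2 n * Ve a (e+1) Nc n = W n * (1 + m n / we)" if nN: "n \<le> N" for n
  proof -
    have "(e + of_nat n)*(a-e+of_nat n)/(e*(a-e)) = 1 + m n / we"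
      using e0 ae[of 0] we0 unfolding m_def we_def by (simp add: field_simps, (simp add: algebra_simps)?)
    thus ?thesis unfolding Ve_up[OF e0 ae[OF nN]] W_def by simp
  qed
  have S3: "Cm a (a1+1) d1 d2 n * Ve a e Nc n = W n * (1 + m n / wb)" if nN: "n \<le> N" for n
  proof -
    have "(a1 + of_nat n)*(a-a1+of_nat n)/(a1*(a-a1)) = 1 + m n / wb"
      using a10 aa1[of 0] wb0 unfolding m_def wb_def by (simp add: field_simps, (simp add: algebra_simps)?)
    thus ?thesis unfolding Cm_up[OF a10 aa1[OF nN]] W_def by simp
  qed
  have S4: "1 + m n / wp = \<alpha> * (1 + m n / we) + (1 - \<alpha>) * (1 + m n / wb)" for n
  proof -
    define dd where "dd = wb - we"
    have dd0: "dd \<noteq> 0" using wbe unfolding dd_def .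
    have wbd: "wb = dd + we" unfolding dd_def by simp
    have B1: "\<alpha>/we = (wb-wp)/(wp*dd)" unfolding \<alpha>_def dd_def[symmetric] using we0 by simp
    have nu: "wp*dd - we*(wb-wp) = (wp-we)*wb" unfolding dd_def by algebra
    have B2: "1-\<alpha> = (wp-we)*wb/(wp*dd)" unfolding \<alpha>_def dd_def[symmetric] using wp0 dd0
      by (simp add: field_simps nu[symmetric], simp add: dd_def algebra_simps)
    have B3: "(1-\<alpha>)/wb = (wp-we)/(wp*dd)" unfolding B2 using wb0 by simp
    have A: "\<alpha>/we + (1-\<alpha>)/wb = 1/wp" unfolding B1 B3
    proof -
      have "(wb-wp)/(wp*dd) + (wp-we)/(wp*dd) = dd/(wp*dd)" unfolding dd_def by (simp add: add_divide_distrib[symmetric])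
      also have "\<dots> = 1/wp" using dd0 by simp
      finally show "(wb-wp)/(wp*dd) + (wp-we)/(wp*dd) = 1/wp" .
    qed
    have "\<alpha> * (1 + m n / we) + (1 - \<alpha>) * (1 + m n / wb) = 1 + m n * (\<alpha>/we + (1-\<alpha>)/wb)"
      by (simp add: algebra_simps)
    thus ?thesis unfolding A by simp
  qed
  have D1: "(\<Sum>n\<le>N. Cm a a1 d1 d2 n * Ve a (e+1) Nc n) = RD a a1 d1 d2 N"
  proof -
    have g1: "gen [a, a-a1, a-d1, a-d2, a-a1-d1, a-a1-d2, a-d1-d2, a-a1-d1-d2, 2*a-a1-d1-d2] L"
      by (rule gen_subset[OF _ g]) (auto simp: a_def)
    have eq: "e + 1 = 1+2*a-a1-d1-d2+of_nat N" by (simp add: e_def a_def Nc_def algebra_simps)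
    show ?thesis unfolding eq Nc_def by (rule dougall[OF g1]) (use L in simp)
  qed
  have D2: "(\<Sum>n\<le>N. Cm a (a1+1) d1 d2 n * Ve a e Nc n) = RD a (a1+1) d1 d2 N"
  proof -
    have g1: "gen [a, a-(a1+1), a-d1, a-d2, a-(a1+1)-d1, a-(a1+1)-d2, a-d1-d2, a-(a1+1)-d1-d2, 2*a-(a1+1)-d1-d2] L"
      by (rule gen_subset[OF _ g]) (auto simp: a_def)
    have eq: "e = 1+2*a-(a1+1)-d1-d2+of_nat N" by (simp add: e_def a_def Nc_def algebra_simps)
    show ?thesis unfolding eq Nc_def by (rule dougall[OF g1]) (use L in simp)
  qed
  have Sum: "(\<Sum>n\<le>N. hyp_term [f - 1, (f + 1) / 2, a1, f - p, p + 1, d1, d2, 2 * f - 2 - d1 - d2 - a1 + of_nat N, - of_nat N]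
              [(f - 1) / 2, f - a1, p, f - p - 1, f - d1, f - d2, 2 + a1 + d1 + d2 - f - of_nat N, f + of_nat N] 1 n)
     = \<alpha> * RD a a1 d1 d2 N + (1 - \<alpha>) * RD a (a1+1) d1 d2 N"
  proof -
    have "(\<Sum>n\<le>N. hyp_term [f - 1, (f + 1) / 2, a1, f - p, p + 1, d1, d2, 2 * f - 2 - d1 - d2 - a1 + of_nat N, - of_nat N]
              [(f - 1) / 2, f - a1, p, f - p - 1, f - d1, f - d2, 2 + a1 + d1 + d2 - f - of_nat N, f + of_nat N] 1 n)
      = (\<Sum>n\<le>N. \<alpha> * (Cm a a1 d1 d2 n * Ve a (e+1) Nc n) + (1 - \<alpha>) * (Cm a (a1+1) d1 d2 n * Ve a e Nc n))"
    proof (rule sum.cong)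
      fix n assume "n \<in> {..N}"
      hence nN: "n \<le> N" by simp
      show "hyp_term [f - 1, (f + 1) / 2, a1, f - p, p + 1, d1, d2, 2 * f - 2 - d1 - d2 - a1 + of_nat N, - of_nat N]
              [(f - 1) / 2, f - a1, p, f - p - 1, f - d1, f - d2, 2 + a1 + d1 + d2 - f - of_nat N, f + of_nat N] 1 n
        = \<alpha> * (Cm a a1 d1 d2 n * Ve a (e+1) Nc n) + (1 - \<alpha>) * (Cm a (a1+1) d1 d2 n * Ve a e Nc n)"
        unfolding S1[OF nN] S2[OF nN] S3[OF nN] S4[of n] by (simp add: algebra_simps)
    qed simp
    also have "\<dots> = \<alpha> * (\<Sum>n\<le>N. Cm a a1 d1 d2 n * Ve a (e+1) Nc n) + (1 - \<alpha>) * (\<Sum>n\<le>N. Cm a (a1+1) d1 d2 n * Ve a e Nc n)"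
      by (simp add: sum.distrib sum_distrib_left)
    finally show ?thesis unfolding D1 D2 .
  qed
  define X1 where "X1 = f-a1-1"
  define X2 where "X2 = f-a1-d1-1"
  define X3 where "X3 = f-a1-d2-1"
  define X4 where "X4 = f-a1-d1-d2-1"
  define M where "M = f-1-d1-d2+Nc"
  have PX1: "pochhammer (f-a1-1) N \<noteq> 0" by (rule GP[where x="f-1-a1" and kk=0]) (use L in auto)
  have PX2: "pochhammer (f-a1-d1-1) N \<noteq> 0" by (rule GP[where x="f-1-a1-d1" and kk=0]) (use L in auto)
  have PX3: "pochhammer (f-a1-d2-1) N \<noteq> 0" by (rule GP[where x="f-1-a1-d2" and kk=0]) (use L in auto)
  have PX4: "pochhammer (f-a1-d1-d2-1) N \<noteq> 0" by (rule GP[where x="f-1-a1-d1-d2" and kk=0]) (use L in auto)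
  have PY1: "pochhammer (f-a1) N \<noteq> 0" by (rule GP[where x="f-1-a1" and kk=1]) (use L in auto)
  have PY2: "pochhammer (f-a1-d1) N \<noteq> 0" by (rule GP[where x="f-1-a1-d1" and kk=1]) (use L in auto)
  have PY3: "pochhammer (f-a1-d2) N \<noteq> 0" by (rule GP[where x="f-1-a1-d2" and kk=1]) (use L in auto)
  have PY4: "pochhammer (f-a1-d1-d2) N \<noteq> 0" by (rule GP[where x="f-1-a1-d1-d2" and kk=1]) (use L in auto)
  have Pd1: "pochhammer (f-d1) N \<noteq> 0" by (rule GP[where x="f-1-d1" and kk=1]) (use L in auto)
  have Pd2: "pochhammer (f-d2) N \<noteq> 0" by (rule GP[where x="f-1-d2" and kk=1]) (use L in auto)
  have X10: "X1 \<noteq> 0" unfolding X1_def by (rule G[of "f-1-a1" 0]) auto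
  have X20: "X2 \<noteq> 0" unfolding X2_def by (rule G[of "f-1-a1-d1" 0]) auto
  have X30: "X3 \<noteq> 0" unfolding X3_def by (rule G[of "f-1-a1-d2" 0]) auto
  have X40: "X4 \<noteq> 0" unfolding X4_def by (rule G[of "f-1-a1-d1-d2" 0]) auto
  have X4N: "X4 + Nc \<noteq> 0" unfolding X4_def Nc_def by (rule G[of "f-1-a1-d1-d2" "int N"]) (use L in auto)
  define P where "P = (pochhammer f N * pochhammer (f - d1 - d2) N * pochhammer (f - a1 - d1 - 1) N
              * pochhammer (f - a1 - d2 - 1) N)
           / (pochhammer (f - d1) N * pochhammer (f - d2) N * pochhammer (f - a1) N
              * pochhammer (f - a1 - d1 - d2 - 1) N)"
  define \<rho>b where "\<rho>b = (X1 + Nc)/X1"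
  define \<rho>e where "\<rho>e = (X2 + Nc)/X2 * ((X3 + Nc)/X3) * (X4/(X4+Nc))"
  have RDb: "RD a (a1+1) d1 d2 N = P * \<rho>b"
  proof -
    have r: "1+a = f" "1+a-(a1+1)-d1 = f-a1-d1-1" "1+a-(a1+1)-d2 = f-a1-d2-1" "1+a-d1-d2 = f-d1-d2"
      "1+a-(a1+1) = f-a1-1" "1+a-d1 = f-d1" "1+a-d2 = f-d2" "1+a-(a1+1)-d1-d2 = f-a1-d1-d2-1"
      by (simp_all add: a_def algebra_simps)
    have q: "pochhammer (X1+1) N / pochhammer X1 N = (X1 + of_nat N)/X1"
      using ratio1[of X1 N] X10 PX1 unfolding X1_def by simp
    have q2: "X1 + 1 = f - a1" by (simp add: X1_def)
    have rb: "\<rho>b = pochhammer (f-a1) N / pochhammer (f-a1-1) N"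
      unfolding \<rho>b_def Nc_def using q unfolding q2 unfolding X1_def by simp
    have ab: "(A*B*C*D)/(E*F*G*H) = (A*D*B*C)/(F*G*Y*H) * (Y/E)" if "Y \<noteq> 0"
      for A B C D E F G H Y :: complex
    proof -
      have "(A*D*B*C)/(F*G*Y*H) * (Y/E) = (A*B*C*D)/(E*F*G*H) * (Y/Y)"
        by (simp add: divide_inverse inverse_mult_distrib mult_ac)
      thus ?thesis using that by simp
    qed
    have s1: "f-(a1+1) = f-a1-1" by simp
    have s2: "f-a1-1-d1 = f-a1-d1-1" "f-a1-1-d2 = f-a1-d2-1" by simp_all
    have s3: "f-a1-d1-1-d2 = f-a1-d1-d2-1" by simp
    show ?thesis unfolding RD_def r(1) unfolding s1 unfolding s2 unfolding s3 rb P_def by (rule ab[OF PY1])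
  qed
  have RDe: "RD a a1 d1 d2 N = P * \<rho>e"
  proof -
    have r: "1+a = f" "1+a-a1-d1 = f-a1-d1" "1+a-a1-d2 = f-a1-d2" "1+a-d1-d2 = f-d1-d2"
      "1+a-a1 = f-a1" "1+a-d1 = f-d1" "1+a-d2 = f-d2" "1+a-a1-d1-d2 = f-a1-d1-d2"
      by (simp_all add: a_def algebra_simps)
    have q2: "pochhammer (X2+1) N / pochhammer X2 N = (X2 + of_nat N)/X2"
      using ratio1[of X2 N] X20 PX2 unfolding X2_def by simp
    have q3: "pochhammer (X3+1) N / pochhammer X3 N = (X3 + of_nat N)/X3"
      using ratio1[of X3 N] X30 PX3 unfolding X3_def by simp
    have q4: "pochhammer (X4+1) N / pochhammer X4 N = (X4 + of_nat N)/X4"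
      using ratio1[of X4 N] X40 PX4 unfolding X4_def by simp
    have e2: "X2 + 1 = f-a1-d1" "X3 + 1 = f-a1-d2" "X4 + 1 = f-a1-d1-d2"
      by (simp_all add: X2_def X3_def X4_def)
    have r2: "(X2 + Nc)/X2 = pochhammer (f-a1-d1) N / pochhammer (f-a1-d1-1) N"
      unfolding Nc_def using q2 unfolding e2 unfolding X2_def by simp
    have r3: "(X3 + Nc)/X3 = pochhammer (f-a1-d2) N / pochhammer (f-a1-d2-1) N"
      unfolding Nc_def using q3 unfolding e2 unfolding X3_def by simp
    have r4: "X4/(X4 + Nc) = pochhammer (f-a1-d1-d2-1) N / pochhammer (f-a1-d1-d2) N"
    proof -
      have "X4/(X4 + Nc) = inverse ((X4 + of_nat N)/X4)" by (simp add: Nc_def)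
      also have "\<dots> = inverse (pochhammer (X4+1) N / pochhammer X4 N)" unfolding q4 ..
      also have "\<dots> = pochhammer X4 N / pochhammer (X4+1) N" by simp
      finally show ?thesis unfolding e2 unfolding X4_def .
    qed
    have ab: "(A*B2*B3*D)/(Y1*F*G*Y4) = (A*D*X2*X3)/(F*G*Y1*X4) * (B2/X2 * (B3/X3) * (X4/Y4))"
      if "X2 \<noteq> 0" "X3 \<noteq> 0" "X4 \<noteq> 0"
      for A B2 B3 D Y1 F G Y4 X2 X3 X4 :: complex
    proof -
      have e: "(X2/X2)*(X3/X3)*(X4/X4) = 1" using that by simp
      have "(A*D*X2*X3)/(F*G*Y1*X4) * (B2/X2 * (B3/X3) * (X4/Y4)) = (A*B2*B3*D)/(Y1*F*G*Y4) * ((X2/X2)*(X3/X3)*(X4/X4))"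
        by (simp only: divide_inverse inverse_mult_distrib mult_ac)
      thus ?thesis unfolding e by simp
    qed
    show ?thesis unfolding RD_def r \<rho>e_def r2 r3 r4 P_def by (rule ab[OF PX2 PX3 PX4])
  qed
  have k0: "k \<noteq> 0" using kN N0 by (auto simp: pochhammer_0_left)
  have kr: "pochhammer (k + 1) N / pochhammer k N = (k + Nc)/k"
    unfolding Nc_def using ratio1[of k N] k0 kN by simp
  have FIN: "\<alpha> * \<rho>e + (1 - \<alpha>) * \<rho>b = (k + Nc)/k"
  proof -
    have den: "p * (f - p - 1) - a1 * (2 * f - 2 - d1 - d2 - a1 + of_nat N) = wp - a1*e"
      by (simp add: wp_def a_def e_def Nc_def algebra_simps)
    have num: "p * (f - 1 - d1 - d2 + of_nat N) * (p - f + 1) = -(wp*M)"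
      by (simp add: wp_def a_def M_def Nc_def algebra_simps)
    have hd0: "wp - a1*e \<noteq> 0" using hden unfolding den .
    have hh: "h = -(wp*M)/(wp - a1*e)" unfolding h_def num den ..
    have kn: "h * (1 + d1 + a1 - f) * (1 + d2 + a1 - f) = h*X2*X3"
      by (simp add: X2_def X3_def algebra_simps)
    have kdn: "d1 * d2 - h * (1 + d1 + d2 + a1 - f) = d1*d2 + h*X4"
      by (simp add: X4_def algebra_simps)
    have kk: "k = h*X2*X3/(d1*d2 + h*X4)" unfolding k_def kn kdn ..
    have kd0: "d1*d2 + h*X4 \<noteq> 0" using kden unfolding kdn .
    have h0: "h \<noteq> 0" using k0 kk by auto
    have M0: "M \<noteq> 0" using h0 hh by auto
    have KN: "(k+Nc)/k = 1 + Nc*(d1*d2 + h*X4)/(h*X2*X3)"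
    proof -
      have "(k+Nc)/k = 1 + Nc/k" using k0 by (simp add: add_divide_distrib)
      also have "Nc/k = Nc*(d1*d2 + h*X4)/(h*X2*X3)" unfolding kk by (simp add: divide_divide_eq_right)
      finally show ?thesis .
    qed
    have HH: "Nc*(d1*d2 + h*X4)/(h*X2*X3) = Nc*X4/(X2*X3) - Nc*d1*d2*(wp - a1*e)/(wp*M*X2*X3)"
    proof -
      have "Nc*(d1*d2 + h*X4)/(h*X2*X3) = Nc*d1*d2/(h*X2*X3) + Nc*X4/(X2*X3)"
        using h0 X20 X30 by (simp add: field_simps)
      moreover have "Nc*d1*d2/(h*X2*X3) = - Nc*d1*d2*(wp - a1*e)/(wp*M*X2*X3)"
        unfolding hh using wp0 M0 hd0 X20 X30 by (simp add: field_simps)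
      ultimately show ?thesis by simp
    qed
    define dd where "dd = wb - we"
    have dd0: "dd \<noteq> 0" using wbe unfolding dd_def .
    define D where "D = wp*dd*X1*X2*X3*(X4+Nc)*M"
    have D0: "D \<noteq> 0" unfolding D_def using wp0 dd0 X10 X20 X30 X4N M0 by simp
    have al: "\<alpha> = we*(wb-wp)/(wp*dd)" unfolding \<alpha>_def dd_def ..
    have canc1: "(u/v) * (a1/b1 * (a2/b2) * (a3/b3)) * (v*X*b1*b2*b3*MM) = u*(a1*a2*a3)*X*MM"
      if "v \<noteq> 0" "b1 \<noteq> 0" "b2 \<noteq> 0" "b3 \<noteq> 0" for u v a1 b1 a2 b2 a3 b3 X MM :: complex
      using that by (simp add: field_simps)
    have canc2: "(1 - u/v) * (aa/b) * (v*b*c1*c2*c3*MM) = (v - u)*aa*c1*c2*c3*MM"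
      if "v \<noteq> 0" "b \<noteq> 0" for u v aa b c1 c2 c3 MM :: complex
      using that by (simp add: field_simps)
    have canc3: "(1 + NN*Z/(Y2*Y3) - T/(W*MM*Y2*Y3)) * (W*dd*Y1*Y2*Y3*Y*MM)
       = W*dd*Y1*Y2*Y3*Y*MM + NN*Z*W*dd*Y1*Y*MM - T*dd*Y1*Y"
      if "W \<noteq> 0" "MM \<noteq> 0" "Y2 \<noteq> 0" "Y3 \<noteq> 0" for NN Z Y1 Y2 Y3 T W MM Y dd :: complex
      using that by (simp add: field_simps, (simp add: algebra_simps)?)
    have L1: "\<alpha> * \<rho>e * D = we*(wb-wp)*((X2+Nc)*(X3+Nc)*X4)*X1*M"
      unfolding al \<rho>e_def D_def mult.assoc[of wp dd, symmetric] using wp0 dd0 X20 X30 X4N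
      by (intro canc1) simp_all
    have L2: "(1-\<alpha>) * \<rho>b * D = (wp*dd - we*(wb-wp))*(X1+Nc)*X2*X3*(X4+Nc)*M"
      unfolding al \<rho>b_def D_def using wp0 dd0 X10 by (intro canc2) simp_all
    have R1: "(1 + Nc*X4/(X2*X3) - Nc*d1*d2*(wp - a1*e)/(wp*M*X2*X3)) * D
      = wp*dd*X1*X2*X3*(X4+Nc)*M + Nc*X4*wp*dd*X1*(X4+Nc)*M - Nc*d1*d2*(wp - a1*e)*dd*X1*(X4+Nc)"
      unfolding D_def using wp0 M0 X20 X30 by (intro canc3) simp_all
    have PL: "we*(wb-wp)*((X2+Nc)*(X3+Nc)*X4)*X1*M + (wp*dd - we*(wb-wp))*(X1+Nc)*X2*X3*(X4+Nc)*M
      = wp*dd*X1*X2*X3*(X4+Nc)*M + Nc*X4*wp*dd*X1*(X4+Nc)*M - Nc*d1*d2*(wp - a1*e)*dd*X1*(X4+Nc)"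
    proof -
      have "e = 2*f-2-d1-d2-a1+Nc" "wp = p*(f-1-p)" "wb = a1*(f-1-a1)" "we = e*(f-1-e)"
        "X1 = f-a1-1" "X2=f-a1-d1-1" "X3=f-a1-d2-1" "X4=f-a1-d1-d2-1" "M=f-1-d1-d2+Nc" "dd = wb - we"
        by (simp_all add: e_def wp_def wb_def we_def a_def X1_def X2_def X3_def X4_def M_def dd_def)
      thus ?thesis by algebra
    qed
    have "(\<alpha> * \<rho>e + (1 - \<alpha>) * \<rho>b) * D = (1 + Nc*X4/(X2*X3) - Nc*d1*d2*(wp - a1*e)/(wp*M*X2*X3)) * D"
    proof -
      have "(\<alpha> * \<rho>e + (1 - \<alpha>) * \<rho>b) * D = \<alpha> * \<rho>e * D + (1 - \<alpha>) * \<rho>b * D"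
        by (rule distrib_right)
      also have "\<dots> = wp*dd*X1*X2*X3*(X4+Nc)*M + Nc*X4*wp*dd*X1*(X4+Nc)*M - Nc*d1*d2*(wp - a1*e)*dd*X1*(X4+Nc)"
        unfolding L1 L2 by (rule PL)
      finally show ?thesis unfolding R1 .
    qed
    hence "\<alpha> * \<rho>e + (1 - \<alpha>) * \<rho>b = 1 + Nc*X4/(X2*X3) - Nc*d1*d2*(wp - a1*e)/(wp*M*X2*X3)"
      using D0 by simp
    thus ?thesis unfolding KN HH by simp
  qed
  have "\<alpha> * RD a a1 d1 d2 N + (1 - \<alpha>) * RD a (a1+1) d1 d2 N = P * (\<alpha> * \<rho>e + (1 - \<alpha>) * \<rho>b)"
    unfolding RDb RDe by (simp add: algebra_simps)
  thus ?thesis unfolding Sum FIN kr[symmetric] P_def .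
qed


lemma ev_lin:
  fixes c s :: complex
  assumes "s \<noteq> 0"
  shows "eventually (\<lambda>t. c + s*t \<noteq> 0) (at 0)"
proof (cases "c = 0")
  case True
  thus ?thesis using assms by (simp add: eventually_at_filter)
next
  case False
  have "((\<lambda>t. c + s*t) \<longlongrightarrow> c + s*0) (at 0)" by (intro tendsto_intros)
  thus ?thesis using False by (intro tendsto_imp_eventually_ne) simp_all
qed

lemma ev_quad:
  fixes q0 q1 q2 :: complex
  assumes "q2 \<noteq> 0"
  shows "eventually (\<lambda>t. q0 + q1*t + q2*t^2 \<noteq> 0) (at 0)"
proof (cases "q0 = 0")
  case False
  have "((\<lambda>t. q0 + q1*t + q2*t^2) \<longlongrightarrow> q0 + q1*0 + q2*0^2) (at 0)" by (intro tendsto_intros)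
  thus ?thesis using False by (intro tendsto_imp_eventually_ne) simp_all
next
  case True
  have "eventually (\<lambda>t. q1 + q2*t \<noteq> 0) (at 0)" by (rule ev_lin[OF assms])
  moreover have "eventually (\<lambda>t::complex. t \<noteq> 0) (at 0)" by (simp add: eventually_at_filter)
  ultimately show ?thesis
  proof eventually_elim
    case (elim t)
    have "q0 + q1*t + q2*t^2 = t*(q1 + q2*t)" using True by (simp add: power2_eq_square algebra_simps)
    thus ?case using elim by simp
  qed
qed

lemma gen_ev:
  assumes "\<forall>cs\<in>set ps. snd cs \<noteq> (0::complex)"
  shows "eventually (\<lambda>t. gen (map (\<lambda>cs. fst cs + snd cs * t) ps) L) (at 0)"
proof -
  have "eventually (\<lambda>t. \<forall>cs\<in>set ps. \<forall>i\<in>{-int L..int L}. fst cs + snd cs * t + of_int i \<noteq> 0) (at 0)"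
  proof (intro eventually_ball_finite ballI)
    fix cs i assume cs: "cs \<in> set ps"
    have "eventually (\<lambda>t. (fst cs + of_int i) + snd cs * t \<noteq> 0) (at 0)"
      using assms cs by (intro ev_lin) auto
    thus "eventually (\<lambda>t. fst cs + snd cs * t + of_int i \<noteq> 0) (at 0)"
      by (simp add: algebra_simps)
  qed auto
  thus ?thesis
  proof eventually_elim
    case (elim t)
    show ?case unfolding gen_def
    proof (intro ballI allI impI)
      fix x i assume x: "x \<in> set (map (\<lambda>cs. fst cs + snd cs * t) ps)" and i: "\<bar>i\<bar> \<le> int L"
      from x obtain cs where cs: "cs \<in> set ps" "x = fst cs + snd cs * t" by auto
      have "i \<in> {-int L..int L}" using i by auto
      thus "x + of_int i \<noteq> 0" using elim cs by blast
    qed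
  qed
qed

lemma tendsto_poch [tendsto_intros]:
  "(g \<longlongrightarrow> (a::complex)) F \<Longrightarrow> ((\<lambda>x. pochhammer (g x) n) \<longlongrightarrow> pochhammer a n) F"
  by (rule isCont_tendsto_compose[OF isCont_pochhammer])

lemma poch_nz: "\<not> nonpos_int b \<Longrightarrow> pochhammer b n \<noteq> 0"
  unfolding nonpos_int_def by (auto simp: pochhammer_eq_0_iff)

lemma hyp_explicit:
  "hyp_term [x1,x2,x3,x4,x5,x6,x7,x8,x9] [y1,y2,y3,y4,y5,y6,y7,y8] z n =
    (pochhammer x1 n * pochhammer x2 n * pochhammer x3 n * pochhammer x4 n * pochhammer x5 n *
     pochhammer x6 n * pochhammer x7 n * pochhammer x8 n * pochhammer x9 n) /
    (pochhammer y1 n * pochhammer y2 n * pochhammer y3 n * pochhammer y4 n * pochhammer y5 n *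
     pochhammer y6 n * pochhammer y7 n * pochhammer y8 n * fact n) * z^n"
  by (simp add: hyp_term_def mult_ac)

theorem mainTheorem3:
  fixes N :: nat and f a1 p d1 d2 h k :: complex
  assumes lower: "\<forall>b\<in>set [(f - 1) / 2, f - a1, p, f - p - 1, f - d1, f - d2,
                        2 + a1 + d1 + d2 - f - of_nat N, f + of_nat N]. \<not> nonpos_int b"
    and hden: "p * (f - p - 1) - a1 * (2 * f - 2 - d1 - d2 - a1 + of_nat N) \<noteq> 0"
    and h_def: "h = p * (f - 1 - d1 - d2 + of_nat N) * (p - f + 1) /
                   (p * (f - p - 1) - a1 * (2 * f - 2 - d1 - d2 - a1 + of_nat N))"
    and kden: "d1 * d2 - h * (1 + d1 + d2 + a1 - f) \<noteq> 0"
    and k_def: "k = h * (1 + d1 + a1 - f) * (1 + d2 + a1 - f) /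
                   (d1 * d2 - h * (1 + d1 + d2 + a1 - f))"
    and rhs_den: "pochhammer (f - a1 - d1 - d2 - 1) N \<noteq> 0" "pochhammer k N \<noteq> 0"
  shows "hypF [f - 1, (f + 1) / 2, a1, f - p, p + 1, d1, d2,
               2 * f - 2 - d1 - d2 - a1 + of_nat N, - of_nat N]
              [(f - 1) / 2, f - a1, p, f - p - 1, f - d1, f - d2,
               2 + a1 + d1 + d2 - f - of_nat N, f + of_nat N] 1
         = (pochhammer f N * pochhammer (f - d1 - d2) N * pochhammer (f - a1 - d1 - 1) N
              * pochhammer (f - a1 - d2 - 1) N)
           / (pochhammer (f - d1) N * pochhammer (f - d2) N * pochhammer (f - a1) N
              * pochhammer (f - a1 - d1 - d2 - 1) N)
           * (pochhammer (k + 1) N / pochhammer k N)"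
proof -
  have lw: "\<not> nonpos_int ((f - 1) / 2)" "\<not> nonpos_int (f - a1)" "\<not> nonpos_int p" "\<not> nonpos_int (f-p-1)"
    "\<not> nonpos_int (f-d1)" "\<not> nonpos_int (f-d2)" "\<not> nonpos_int (2 + a1 + d1 + d2 - f - of_nat N)"
    "\<not> nonpos_int (f + of_nat N)" using lower by simp_all
  have fin: "hypF [f - 1, (f + 1) / 2, a1, f - p, p + 1, d1, d2, 2 * f - 2 - d1 - d2 - a1 + of_nat N, - of_nat N] [(f - 1) / 2, f - a1, p, f - p - 1, f - d1, f - d2, 2 + a1 + d1 + d2 - f - of_nat N, f + of_nat N] 1 = (\<Sum>n\<le>N. hyp_term [f - 1, (f + 1) / 2, a1, f - p, p + 1, d1, d2, 2 * f - 2 - d1 - d2 - a1 + of_nat N, - of_nat N] [(f - 1) / 2, f - a1, p, f - p - 1, f - d1, f - d2, 2 + a1 + d1 + d2 - f - of_nat N, f + of_nat N] 1 n)"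
    unfolding hypF_def
  proof (rule suminf_finite)
    fix n assume "n \<notin> {..N}"
    hence "N < n" by simp
    hence z: "pochhammer (- of_nat N :: complex) n = 0" by (rule pochhammer_of_nat_eq_0_lemma)
    show "hyp_term [f - 1, (f + 1) / 2, a1, f - p, p + 1, d1, d2, 2 * f - 2 - d1 - d2 - a1 + of_nat N, - of_nat N] [(f - 1) / 2, f - a1, p, f - p - 1, f - d1, f - d2, 2 + a1 + d1 + d2 - f - of_nat N, f + of_nat N] 1 n = 0"
      unfolding hyp_explicit z by simp
  qed simp
  show ?thesis
  proof (cases "N = 0")
    case True
    thus ?thesis unfolding fin by (simp add: hyp_explicit)
  next
    case False
    hence N0: "N > 0" by simp
    define F where "F t = f + t" for t :: complex
    define A where "A t = a1 + 10*t" for t :: complex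
    define E1 where "E1 t = d1 + 100*t" for t :: complex
    define E2 where "E2 t = d2 + 1000*t" for t :: complex
    define Hf where "Hf t = p * (F t - 1 - E1 t - E2 t + of_nat N) * (p - F t + 1) /
                   (p * (F t - p - 1) - A t * (2 * F t - 2 - E1 t - E2 t - A t + of_nat N))" for t
    define Kf where "Kf t = Hf t * (1 + E1 t + A t - F t) * (1 + E2 t + A t - F t) /
                   (E1 t * E2 t - Hf t * (1 + E1 t + E2 t + A t - F t))" for t
    define LH where "LH t = (\<Sum>n\<le>N. hyp_term [F t - 1, (F t + 1) / 2, A t, F t - p, p + 1, E1 t, E2 t, 2 * F t - 2 - E1 t - E2 t - A t + of_nat N, - of_nat N] [(F t - 1) / 2, F t - A t, p, F t - p - 1, F t - E1 t, F t - E2 t, 2 + A t + E1 t + E2 t - F t - of_nat N, F t + of_nat N] 1 n)" for t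
    define RH where "RH t = (pochhammer (F t) N * pochhammer (F t - E1 t - E2 t) N * pochhammer (F t - A t - E1 t - 1) N
              * pochhammer (F t - A t - E2 t - 1) N)
           / (pochhammer (F t - E1 t) N * pochhammer (F t - E2 t) N * pochhammer (F t - A t) N
              * pochhammer (F t - A t - E1 t - E2 t - 1) N)
           * (pochhammer (Kf t + 1) N / pochhammer (Kf t) N)" for t
    have at0: "F 0 = f" "A 0 = a1" "E1 0 = d1" "E2 0 = d2" by (simp_all add: F_def A_def E1_def E2_def)
    have H0: "Hf 0 = h" unfolding Hf_def at0 h_def ..
    have K0: "Kf 0 = k" unfolding Kf_def at0 H0 k_def ..
    have LH0: "LH 0 = (\<Sum>n\<le>N. hyp_term [f - 1, (f + 1) / 2, a1, f - p, p + 1, d1, d2, 2 * f - 2 - d1 - d2 - a1 + of_nat N, - of_nat N] [(f - 1) / 2, f - a1, p, f - p - 1, f - d1, f - d2, 2 + a1 + d1 + d2 - f - of_nat N, f + of_nat N] 1 n)" unfolding LH_def at0 ..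
    have RH0: "RH 0 = (pochhammer f N * pochhammer (f - d1 - d2) N * pochhammer (f - a1 - d1 - 1) N
              * pochhammer (f - a1 - d2 - 1) N)
           / (pochhammer (f - d1) N * pochhammer (f - d2) N * pochhammer (f - a1) N
              * pochhammer (f - a1 - d1 - d2 - 1) N)
           * (pochhammer (k + 1) N / pochhammer k N)" unfolding RH_def at0 K0 ..
    have tF: "(F \<longlongrightarrow> F 0) (at 0)" unfolding F_def by (intro tendsto_intros)
    have tA: "(A \<longlongrightarrow> A 0) (at 0)" unfolding A_def by (intro tendsto_intros)
    have tE1: "(E1 \<longlongrightarrow> E1 0) (at 0)" unfolding E1_def by (intro tendsto_intros)
    have tE2: "(E2 \<longlongrightarrow> E2 0) (at 0)" unfolding E2_def by (intro tendsto_intros)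
    have tH: "(Hf \<longlongrightarrow> Hf 0) (at 0)" unfolding Hf_def
      by (intro tendsto_intros tF tA tE1 tE2) (use hden in \<open>simp add: at0\<close>)
    have tK: "(Kf \<longlongrightarrow> Kf 0) (at 0)" unfolding Kf_def
      by (intro tendsto_intros tF tA tE1 tE2 tH) (use kden in \<open>simp add: at0 H0\<close>)
    have tLH: "(LH \<longlongrightarrow> LH 0) (at 0)" unfolding LH_def hyp_explicit
      by (intro tendsto_intros tF tA tE1 tE2) (use lw in \<open>simp_all add: at0 poch_nz\<close>)
    have tRH: "(RH \<longlongrightarrow> RH 0) (at 0)" unfolding RH_def
      by (intro tendsto_intros tF tA tE1 tE2 tK) (use lw rhs_den in \<open>simp_all add: at0 K0 poch_nz\<close>)
    have ev1: "eventually (\<lambda>t. gen [F t-1, F t-1-A t, F t-1-E1 t, F t-1-E2 t, F t-1-A t-E1 t, F t-1-A t-E2 t, F t-1-E1 t-E2 t, F t-1-A t-E1 t-E2 t, 2*(F t-1)-A t-E1 t-E2 t, F t-1-(A t+1), F t-1-(A t+1)-E1 t, F t-1-(A t+1)-E2 t, F t-1-(A t+1)-E1 t-E2 t, 2*(F t-1)-(A t+1)-E1 t-E2 t, A t, F t-1-p] (2*N+4)) (at 0)"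
    proof -
      have eq: "[F t-1, F t-1-A t, F t-1-E1 t, F t-1-E2 t, F t-1-A t-E1 t, F t-1-A t-E2 t, F t-1-E1 t-E2 t, F t-1-A t-E1 t-E2 t, 2*(F t-1)-A t-E1 t-E2 t, F t-1-(A t+1), F t-1-(A t+1)-E1 t, F t-1-(A t+1)-E2 t, F t-1-(A t+1)-E1 t-E2 t, 2*(F t-1)-(A t+1)-E1 t-E2 t, A t, F t-1-p] = map (\<lambda>cs. fst cs + snd cs * t) [(f-1, 1), (f-1-a1, -9), (f-1-d1, -99), (f-1-d2, -999), (f-1-a1-d1, -109), (f-1-a1-d2, -1009), (f-1-d1-d2, -1099), (f-1-a1-d1-d2, -1109), (2*(f-1)-a1-d1-d2, -1108), (f-1-(a1+1), -9), (f-1-(a1+1)-d1, -109), (f-1-(a1+1)-d2, -1009), (f-1-(a1+1)-d1-d2, -1109), (2*(f-1)-(a1+1)-d1-d2, -1108), (a1, 10), (f-1-p, 1)]" for t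
        by (simp add: F_def A_def E1_def E2_def algebra_simps)
      have "eventually (\<lambda>t. gen (map (\<lambda>cs. fst cs + snd cs * t) [(f-1, 1), (f-1-a1, -9), (f-1-d1, -99), (f-1-d2, -999), (f-1-a1-d1, -109), (f-1-a1-d2, -1009), (f-1-d1-d2, -1099), (f-1-a1-d1-d2, -1109), (2*(f-1)-a1-d1-d2, -1108), (f-1-(a1+1), -9), (f-1-(a1+1)-d1, -109), (f-1-(a1+1)-d2, -1009), (f-1-(a1+1)-d1-d2, -1109), (2*(f-1)-(a1+1)-d1-d2, -1108), (a1, 10), (f-1-p, 1)]) (2*N+4)) (at 0)"
        by (rule gen_ev) simp
      thus ?thesis unfolding eq .
    qed
    define e0 where "e0 = 2*f-2-d1-d2-a1+of_nat N"
    define q0 where "q0 = a1*(f-1-a1)-e0*(f-1-e0)"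
    define q1 where "q1 = 10*(f-1-a1)-9*a1-1109*e0+1108*(f-1-e0)"
    have ev2: "eventually (\<lambda>t. A t*(F t-1-A t) \<noteq> (2*F t-2-E1 t-E2 t-A t+of_nat N)*(F t-1-(2*F t-2-E1 t-E2 t-A t+of_nat N))) (at 0)"
    proof -
      have "eventually (\<lambda>t. q0 + q1*t + 1228682*t^2 \<noteq> 0) (at 0)" by (rule ev_quad) simp
      moreover have "A t*(F t-1-A t) - (2*F t-2-E1 t-E2 t-A t+of_nat N)*(F t-1-(2*F t-2-E1 t-E2 t-A t+of_nat N))
          = q0 + q1*t + 1228682*t^2" for t
        unfolding q0_def q1_def e0_def F_def A_def E1_def E2_def by (simp add: power2_eq_square algebra_simps)
      ultimately show ?thesis by (elim eventually_mono) (metis right_minus_eq)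
    qed
    have ev3: "eventually (\<lambda>t. p * (F t - p - 1) - A t * (2 * F t - 2 - E1 t - E2 t - A t + of_nat N) \<noteq> 0) (at 0)"
    proof (rule tendsto_imp_eventually_ne)
      show "((\<lambda>t. p * (F t - p - 1) - A t * (2 * F t - 2 - E1 t - E2 t - A t + of_nat N)) \<longlongrightarrow>
         p * (F 0 - p - 1) - A 0 * (2 * F 0 - 2 - E1 0 - E2 0 - A 0 + of_nat N)) (at 0)"
        by (intro tendsto_intros tF tA tE1 tE2)
      show "p * (F 0 - p - 1) - A 0 * (2 * F 0 - 2 - E1 0 - E2 0 - A 0 + of_nat N) \<noteq> 0"
        using hden unfolding at0 .
    qed
    have ev4: "eventually (\<lambda>t. E1 t * E2 t - Hf t * (1 + E1 t + E2 t + A t - F t) \<noteq> 0) (at 0)"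
    proof (rule tendsto_imp_eventually_ne)
      show "((\<lambda>t. E1 t * E2 t - Hf t * (1 + E1 t + E2 t + A t - F t)) \<longlongrightarrow>
         E1 0 * E2 0 - Hf 0 * (1 + E1 0 + E2 0 + A 0 - F 0)) (at 0)"
        by (intro tendsto_intros tF tA tE1 tE2 tH)
      show "E1 0 * E2 0 - Hf 0 * (1 + E1 0 + E2 0 + A 0 - F 0) \<noteq> 0"
        using kden unfolding at0 H0 .
    qed
    have ev5: "eventually (\<lambda>t. pochhammer (Kf t) N \<noteq> 0) (at 0)"
    proof (rule tendsto_imp_eventually_ne)
      show "((\<lambda>t. pochhammer (Kf t) N) \<longlongrightarrow> pochhammer (Kf 0) N) (at 0)"
        by (intro tendsto_intros tK)
      show "pochhammer (Kf 0) N \<noteq> 0" using rhs_den(2) unfolding K0 .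
    qed
    have p0: "p \<noteq> 0" using lw(3) unfolding nonpos_int_def by (metis minus_zero of_nat_0)
    have pp: "\<forall>n\<le>N. pochhammer p n \<noteq> 0" using lw(3) by (simp add: poch_nz)
    have ev: "eventually (\<lambda>t. LH t = RH t) (at 0)"
      using ev1 ev2 ev3 ev4 ev5
    proof eventually_elim
      case (elim t)
      show ?case unfolding LH_def RH_def
        apply (rule main_generic[where f="F t" and ?a1.0="A t" and p=p and ?d1.0="E1 t" and ?d2.0="E2 t" and h="Hf t" and k="Kf t" and N=N and L="2*N+4",
              OF elim(1) _ p0 pp elim(2) elim(3) Hf_def elim(4) Kf_def elim(5) N0])
        apply simp
        done
    qed
    have "(RH \<longlongrightarrow> LH 0) (at 0)" using tLH tendsto_cong[OF ev] by simp
    hence "LH 0 = RH 0" using tRH by (intro tendsto_unique[OF at_neq_bot]) 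
    thus ?thesis unfolding fin LH0[symmetric] RH0[symmetric] .
  qed
qed


end
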